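(* Let $n\ge 2$ and let $S_1$ and $S_2$ be two disjoint sets of cells of an $n\times n$ array, each of which forms a Hamilton cycle. Then the cells of $S_1\cup S_2$ can be filled with the integers $1,2,\dots,4n$, each used exactly once, so that in every row and every column the sum of the filled entries equals $8n+2$.
   Context: Rows and columns of an $n\times n$ array are indexed by $\{1,\dots,n\}$. Cells are identified with edges of the complete bipartite graph $K_{n,n}$ with parts $\{a_1,\dots,a_n\}$ and $\{b_1,\dots,b_n\}$, cell $(i,j)$ corresponding to edge $\{a_i,b_j\}$. A set of cells forms a Hamilton cycle if the corresponding edge set is a single cycle of length $2n$ in $K_{n,n}$. (Thus each such set has exactly two cells in each row and in each column.) *)

theory Defs
  imports Main
begin

text \<open>Cells of the n x n array are pairs (i,j) with 1 \<le> i,j \<le> n.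
  Vertices of K_{n,n}: Inl i stands for a_i, Inr j stands for b_j.
  Cell (i,j) corresponds to the edge {a_i, b_j}.\<close>

definition cells :: "nat \<Rightarrow> (nat \<times> nat) set" where
  "cells n = {1..n} \<times> {1..n}"

definition cell_edge :: "nat \<times> nat \<Rightarrow> (nat + nat) set" where
  "cell_edge c = {Inl (fst c), Inr (snd c)}"

definition knn_vertices :: "nat \<Rightarrow> (nat + nat) set" where
  "knn_vertices n = Inl ` {1..n} \<union> Inr ` {1..n}"

definition hamilton_cycle :: "nat \<Rightarrow> (nat \<times> nat) set \<Rightarrow> bool" where
  "hamilton_cycle n S \<longleftrightarrow> S \<subseteq> cells n \<and>
     (\<exists>vs :: (nat + nat) list.
        length vs = 2 * n \<and> distinct vs \<and> set vs = knn_vertices n \<and>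
        cell_edge ` S = {{vs ! k, vs ! ((k + 1) mod (2 * n))} | k. k < 2 * n})"

end

theory Submission imports Defs begin

lemma suc_mod: "k < (L::nat) \<Longrightarrow> (k+1) mod L = (if k+1 = L then 0 else k+1)"
  by auto

lemma rot_exists:
  assumes n2: "n \<ge> 2" and H: "hamilton_cycle n S"
  shows "\<exists>vs. length vs = 2*n \<and> distinct vs \<and> set vs = knn_vertices n \<and> vs!0 = Inl 1 \<and>
     cell_edge ` S = {{vs ! k, vs ! ((k + 1) mod (2 * n))} | k. k < 2 * n}"
proof -
  from H obtain vs0 where l: "length vs0 = 2*n" and d: "distinct vs0" and s: "set vs0 = knn_vertices n"
    and e: "cell_edge ` S = {{vs0 ! k, vs0 ! ((k + 1) mod (2 * n))} | k. k < 2 * n}"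
    unfolding hamilton_cycle_def by blast
  have "Inl 1 \<in> set vs0" using s n2 by (auto simp: knn_vertices_def)
  then obtain p where p: "p < 2*n" "vs0!p = Inl 1" by (metis in_set_conv_nth l)
  define vs where "vs = rotate p vs0"
  have L: "length vs = 2*n" using l by (simp add: vs_def)
  have nth: "vs!k = vs0!((p+k) mod (2*n))" if "k < 2*n" for k
    using l that by (simp add: vs_def nth_rotate)
  have key: "{vs ! k, vs ! ((k + 1) mod (2 * n))} = {vs0 ! ((p+k) mod (2*n)), vs0 ! (((p+k) mod (2*n) + 1) mod (2 * n))}"
    if "k < 2*n" for k
  proof -
    have "(k+1) mod (2*n) < 2*n" using n2 by simp
    then have "vs ! ((k + 1) mod (2 * n)) = vs0 ! ((p + (k+1) mod (2*n)) mod (2*n))" by (rule nth)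
    also have "(p + (k+1) mod (2*n)) mod (2*n) = ((p+k) mod (2*n) + 1) mod (2 * n)"
      by (simp add: mod_add_right_eq mod_add_left_eq add.assoc mod_Suc_eq)
    finally show ?thesis using nth[OF that] by simp
  qed
  have eq: "{{vs ! k, vs ! ((k + 1) mod (2 * n))} | k. k < 2 * n} = {{vs0 ! k, vs0 ! ((k + 1) mod (2 * n))} | k. k < 2 * n}"
  proof (rule set_eqI, rule iffI)
    fix x assume "x \<in> {{vs ! k, vs ! ((k + 1) mod (2 * n))} | k. k < 2 * n}"
    then obtain k where k: "k < 2*n" "x = {vs ! k, vs ! ((k + 1) mod (2 * n))}" by blast
    have "(p+k) mod (2*n) < 2*n" using n2 by simp
    then show "x \<in> {{vs0 ! k, vs0 ! ((k + 1) mod (2 * n))} | k. k < 2 * n}"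
      using key[OF k(1)] k(2) by blast
  next
    fix x assume "x \<in> {{vs0 ! k, vs0 ! ((k + 1) mod (2 * n))} | k. k < 2 * n}"
    then obtain k' where k: "k' < 2*n" "x = {vs0 ! k', vs0 ! ((k' + 1) mod (2 * n))}" by blast
    define k where "k = (if p \<le> k' then k' - p else k' + 2*n - p)"
    have kl: "k < 2*n" using k p by (auto simp: k_def)
    have "(p+k) mod (2*n) = k'" using k p by (auto simp: k_def)
    then show "x \<in> {{vs ! k, vs ! ((k + 1) mod (2 * n))} | k. k < 2 * n}"
      using key[OF kl] k(2) kl by auto
  qed
  have "vs!0 = Inl 1" using nth[of 0] n2 p by simp
  then show ?thesis using L d s e eq
    by (intro exI[of _ vs]) (simp add: vs_def)
qed


lemma cell_edge_inj: "cell_edge c = cell_edge c' \<Longrightarrow> c = c'"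
  by (cases c; cases c') (auto simp: cell_edge_def doubleton_eq_iff)

lemma cycle_struct:
  assumes n2: "n \<ge> 2" and Ssub: "S \<subseteq> cells n" and len: "length vs = 2*n" and dist: "distinct vs"
    and sv: "set vs = knn_vertices n" and v0: "vs!0 = Inl 1"
    and edges: "cell_edge ` S = {{vs ! k, vs ! ((k + 1) mod (2 * n))} | k. k < 2 * n}"
  shows "\<exists>idx. bij_betw idx S {..<2*n} \<and>
     (\<forall>i\<in>{1..n}. \<exists>q. q < 2*n \<and> even q \<and> (i = 1 \<longleftrightarrow> q = 0) \<and>
         (\<forall>x::nat\<Rightarrow>nat. (\<Sum>j\<in>{j. (i,j)\<in>S}. x (idx (i,j))) = x q + x (if q = 0 then 2*n-1 else q-1))) \<and>
     (\<forall>j\<in>{1..n}. \<exists>q. q < 2*n \<and> odd q \<and> q \<noteq> 0 \<and>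
         (\<forall>x::nat\<Rightarrow>nat. (\<Sum>i\<in>{i. (i,j)\<in>S}. x (idx (i,j))) = x q + x (q-1)))"
proof -
  define L where "L = 2*n"
  have L4: "L \<ge> 4" using n2 by (simp add: L_def)
  define E where "E k = {vs ! k, vs ! ((k + 1) mod L)}" for k
  have edges': "cell_edge ` S = {E k | k. k < L}" using edges by (simp add: E_def L_def)
  have Esuc: "E k = {vs!k, vs!(if k+1 = L then 0 else k+1)}" if "k < L" for k
    using that by (simp add: E_def suc_mod)
  have nth_inj: "vs!a = vs!b \<longleftrightarrow> a = b" if "a < L" "b < L" for a b
    using dist len that by (simp add: L_def nth_eq_iff_index_eq)
  have Ek_cell: "\<exists>c\<in>S. cell_edge c = E k" if "k < L" for k
  proof -
    have "E k \<in> cell_edge ` S" using edges' that by blast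
    then show ?thesis by auto
  qed
  have cell_Ek: "\<exists>k<L. cell_edge c = E k" if "c \<in> S" for c
  proof -
    have "cell_edge c \<in> {E k | k. k < L}" using edges' that by blast
    then show ?thesis by auto
  qed
  have E_inj: "k = k'" if "k < L" "k' < L" "E k = E k'" for k k'
  proof -
    let ?s = "\<lambda>k. if k+1 = L then 0 else k+1"
    have s: "?s k < L" "?s k' < L" using that L4 by auto
    have "{vs!k, vs!(?s k)} = {vs!k', vs!(?s k')}" using that Esuc by simp
    then have "(k = k' \<and> ?s k = ?s k') \<or> (k = ?s k' \<and> ?s k = k')"
      using nth_inj that s by (auto simp: doubleton_eq_iff)
    then show ?thesis using L4 that by (auto split: if_splits)
  qed
  have alt1: "isl (vs!(k+1)) \<longleftrightarrow> \<not> isl (vs!k)" if kL: "k+1 < L" for k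
  proof -
    obtain c where c: "c \<in> S" "cell_edge c = E k" using Ek_cell[of k] kL by force
    have "E k = {vs!k, vs!(k+1)}" using Esuc[of k] that by simp
    moreover have "vs!k \<noteq> vs!(k+1)" using nth_inj[of k "k+1"] that by simp
    ultimately show ?thesis using c(2) unfolding cell_edge_def
      by (auto simp: doubleton_eq_iff) (metis sum.disc(1,2))+
  qed
  have alt: "isl (vs!k) \<longleftrightarrow> even k" if "k < L" for k
    using that
  proof (induction k)
    case 0 then show ?case using v0 by simp
  next
    case (Suc k) then show ?case using alt1[of k] by simp
  qed
  define idx where "idx c = (THE k. k < L \<and> cell_edge c = E k)" for c
  have idx_eq: "idx c = k" if "k < L" "cell_edge c = E k" for c k
    unfolding idx_def using that E_inj by (intro the_equality) auto
  have idx_prop: "idx c < L \<and> cell_edge c = E (idx c)" if cS: "c \<in> S" for c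
  proof -
    obtain k where "k < L" "cell_edge c = E k" using cell_Ek[OF cS] by blast
    then show ?thesis using idx_eq[of k c] by simp
  qed
  have inj: "inj_on idx S"
    by (rule inj_onI) (metis idx_prop cell_edge_inj)
  have bij: "bij_betw idx S {..<L}"
  proof -
    have "idx ` S = {..<L}"
    proof
      show "idx ` S \<subseteq> {..<L}" using idx_prop by auto
      show "{..<L} \<subseteq> idx ` S"
      proof
        fix k assume "k \<in> {..<L}"
        then obtain c where "c \<in> S" "cell_edge c = E k" using Ek_cell[of k] by auto
        moreover have "idx c = k" using idx_eq[of k c] \<open>k \<in> {..<L}\<close> calculation by simp
        ultimately show "k \<in> idx ` S" by (metis image_eqI)
      qed
    qed
    then show ?thesis using inj by (simp add: bij_betw_def)
  qed
  have nbr: "{k. k < L \<and> vs!q \<in> E k} = {q, if q = 0 then L-1 else q-1}" if "q < L" for q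
  proof -
    have "vs!q \<in> E k \<longleftrightarrow> k = q \<or> k = (if q = 0 then L-1 else q-1)" if "k < L" for k
    proof -
      have "(if k+1 = L then 0 else k+1) < L" using L4 \<open>k<L\<close> by auto
      then show ?thesis using Esuc[OF \<open>k<L\<close>] nth_inj \<open>q<L\<close> \<open>k<L\<close> L4 by auto
    qed
    then show ?thesis using that L4 by auto
  qed
  have two: "q \<noteq> (if q = 0 then L-1 else q-1)" for q using L4 by auto
  have rowsum: "(\<Sum>j\<in>{j. (i,j)\<in>S}. x (idx (i,j))) = x q + x (if q = 0 then L-1 else q-1)"
    if "q < L" "vs!q = Inl i" for i q and x :: "nat \<Rightarrow> nat"
  proof -
    have injr: "inj_on (\<lambda>j. idx (i,j)) {j. (i,j)\<in>S}"
      using inj by (auto simp: inj_on_def)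
    have img: "(\<lambda>j. idx (i,j)) ` {j. (i,j)\<in>S} = {k. k < L \<and> vs!q \<in> E k}"
    proof
      show "(\<lambda>j. idx (i,j)) ` {j. (i,j)\<in>S} \<subseteq> {k. k < L \<and> vs!q \<in> E k}"
        using idx_prop that by (force simp: cell_edge_def)
      show "{k. k < L \<and> vs!q \<in> E k} \<subseteq> (\<lambda>j. idx (i,j)) ` {j. (i,j)\<in>S}"
      proof
        fix k assume k: "k \<in> {k. k < L \<and> vs!q \<in> E k}"
        then obtain c where c: "c \<in> S" "cell_edge c = E k" using Ek_cell[of k] by auto
        have "Inl i \<in> cell_edge c" using c(2) k that by simp
        then have "fst c = i" by (auto simp: cell_edge_def)
        moreover have "idx c = k" using idx_eq[of k c] c k by simp
        ultimately show "k \<in> (\<lambda>j. idx (i,j)) ` {j. (i,j)\<in>S}"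
          using c by (cases c) (auto intro: image_eqI)
      qed
    qed
    have "(\<Sum>j\<in>{j. (i,j)\<in>S}. x (idx (i,j))) = (\<Sum>k\<in>{k. k < L \<and> vs!q \<in> E k}. x k)"
      using sum.reindex[OF injr, of x] img by (simp add: comp_def)
    also have "\<dots> = x q + x (if q = 0 then L-1 else q-1)"
      using nbr[OF that(1)] two[of q] by simp
    finally show ?thesis .
  qed
  have colsum: "(\<Sum>i\<in>{i. (i,j)\<in>S}. x (idx (i,j))) = x q + x (if q = 0 then L-1 else q-1)"
    if "q < L" "vs!q = Inr j" for j q and x :: "nat \<Rightarrow> nat"
  proof -
    have injr: "inj_on (\<lambda>i. idx (i,j)) {i. (i,j)\<in>S}"
      using inj by (auto simp: inj_on_def)
    have img: "(\<lambda>i. idx (i,j)) ` {i. (i,j)\<in>S} = {k. k < L \<and> vs!q \<in> E k}"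
    proof
      show "(\<lambda>i. idx (i,j)) ` {i. (i,j)\<in>S} \<subseteq> {k. k < L \<and> vs!q \<in> E k}"
        using idx_prop that by (force simp: cell_edge_def)
      show "{k. k < L \<and> vs!q \<in> E k} \<subseteq> (\<lambda>i. idx (i,j)) ` {i. (i,j)\<in>S}"
      proof
        fix k assume k: "k \<in> {k. k < L \<and> vs!q \<in> E k}"
        then obtain c where c: "c \<in> S" "cell_edge c = E k" using Ek_cell[of k] by auto
        have "Inr j \<in> cell_edge c" using c(2) k that by simp
        then have "snd c = j" by (auto simp: cell_edge_def)
        moreover have "idx c = k" using idx_eq[of k c] c k by simp
        ultimately show "k \<in> (\<lambda>i. idx (i,j)) ` {i. (i,j)\<in>S}"
          using c by (cases c) (auto intro: image_eqI)
      qed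
    qed
    have "(\<Sum>i\<in>{i. (i,j)\<in>S}. x (idx (i,j))) = (\<Sum>k\<in>{k. k < L \<and> vs!q \<in> E k}. x k)"
      using sum.reindex[OF injr, of x] img by (simp add: comp_def)
    also have "\<dots> = x q + x (if q = 0 then L-1 else q-1)"
      using nbr[OF that(1)] two[of q] by simp
    finally show ?thesis .
  qed
  have rows: "\<forall>i\<in>{1..n}. \<exists>q. q < 2*n \<and> even q \<and> (i = 1 \<longleftrightarrow> q = 0) \<and>
         (\<forall>x::nat\<Rightarrow>nat. (\<Sum>j\<in>{j. (i,j)\<in>S}. x (idx (i,j))) = x q + x (if q = 0 then 2*n-1 else q-1))"
  proof
    fix i assume i: "i \<in> {1..n}"
    then have "Inl i \<in> set vs" using sv by (simp add: knn_vertices_def)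
    then obtain q where q: "q < L" "vs!q = Inl i" using len by (auto simp: L_def in_set_conv_nth)
    have "even q" using alt[OF q(1)] q(2) by simp
    moreover have "i = 1 \<longleftrightarrow> q = 0" using nth_inj[of q 0] q v0 L4 by auto
    ultimately show "\<exists>q. q < 2*n \<and> even q \<and> (i = 1 \<longleftrightarrow> q = 0) \<and>
         (\<forall>x::nat\<Rightarrow>nat. (\<Sum>j\<in>{j. (i,j)\<in>S}. x (idx (i,j))) = x q + x (if q = 0 then 2*n-1 else q-1))"
      using q rowsum by (auto simp: L_def)
  qed
  have cols: "\<forall>j\<in>{1..n}. \<exists>q. q < 2*n \<and> odd q \<and> q \<noteq> 0 \<and>
         (\<forall>x::nat\<Rightarrow>nat. (\<Sum>i\<in>{i. (i,j)\<in>S}. x (idx (i,j))) = x q + x (q-1))"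
  proof
    fix j assume j: "j \<in> {1..n}"
    then have "Inr j \<in> set vs" using sv by (simp add: knn_vertices_def)
    then obtain q where q: "q < L" "vs!q = Inr j" using len by (auto simp: L_def in_set_conv_nth)
    have "odd q" using alt[OF q(1)] q(2) by simp
    then have "q \<noteq> 0" using odd_pos by auto
    then show "\<exists>q. q < 2*n \<and> odd q \<and> q \<noteq> 0 \<and>
         (\<forall>x::nat\<Rightarrow>nat. (\<Sum>i\<in>{i. (i,j)\<in>S}. x (idx (i,j))) = x q + x (q-1))"
      using q colsum \<open>odd q\<close> by (auto simp: L_def)
  qed
  show ?thesis using bij rows cols unfolding L_def by blast
qed


definition xl :: "nat \<Rightarrow> nat \<Rightarrow> nat" where
  "xl n k = (if even k then n - k div 2 else n + 1 + k div 2)"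
definition yl :: "nat \<Rightarrow> nat \<Rightarrow> nat" where
  "yl n k = (if even k then 2*n + 1 + k div 2 else 4*n - k div 2)"

lemma xl_img: "xl n ` {..<2*n} = {1..2*n}"
proof
  show "xl n ` {..<2*n} \<subseteq> {1..2*n}" by (auto simp: xl_def)
  show "{1..2*n} \<subseteq> xl n ` {..<2*n}"
  proof
    fix v assume v: "v \<in> {1..2*n}"
    show "v \<in> xl n ` {..<2*n}"
    proof (cases "v \<le> n")
      case True
      then have "xl n (2*(n-v)) = v" "2*(n-v) < 2*n" using v by (auto simp: xl_def)
      then show ?thesis by (metis image_eqI lessThan_iff)
    next
      case False
      then have "xl n (2*(v-n-1)+1) = v" "2*(v-n-1)+1 < 2*n" using v by (auto simp: xl_def)
      then show ?thesis by (metis image_eqI lessThan_iff)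
    qed
  qed
qed

lemma yl_img: "yl n ` {..<2*n} = {2*n+1..4*n}"
proof
  show "yl n ` {..<2*n} \<subseteq> {2*n+1..4*n}" by (auto simp: yl_def)
  show "{2*n+1..4*n} \<subseteq> yl n ` {..<2*n}"
  proof
    fix v assume v: "v \<in> {2*n+1..4*n}"
    show "v \<in> yl n ` {..<2*n}"
    proof (cases "v \<le> 3*n")
      case True
      then have "yl n (2*(v-2*n-1)) = v" "2*(v-2*n-1) < 2*n" using v by (auto simp: yl_def)
      then show ?thesis by (metis image_eqI lessThan_iff)
    next
      case False
      then have "yl n (2*(4*n-v)+1) = v" "2*(4*n-v)+1 < 2*n" using v by (auto simp: yl_def)
      then show ?thesis by (metis image_eqI lessThan_iff)
    qed
  qed
qed

lemma arith0: "n \<ge> 1 \<Longrightarrow> xl n 0 + xl n (2*n-1) = 3*n \<and> yl n 0 + yl n (2*n-1) = 5*n+2"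
proof -
  assume "n \<ge> 1"
  then obtain m where m: "n = m + 1" by (metis le_add_diff_inverse2)
  have "2*n - 1 = 2*m+1" using m by simp
  then show ?thesis using m by (simp add: xl_def yl_def)
qed

lemma arith_even: "q < 2*n \<Longrightarrow> q \<noteq> 0 \<Longrightarrow> even q \<Longrightarrow>
   xl n q + xl n (q-1) = 2*n \<and> yl n q + yl n (q-1) = 6*n+2"
proof -
  assume q: "q < 2*n" "q \<noteq> 0" "even q"
  then obtain k where k: "q = 2*k" by blast
  define m where "m = k - 1"
  have m: "q = 2*m + 2" using k q by (simp add: m_def)
  have "q - 1 = 2*m+1" using m by simp
  then show ?thesis using m q by (simp add: xl_def yl_def)
qed

lemma arith_odd: "q < 2*n \<Longrightarrow> odd q \<Longrightarrow>
   xl n q + xl n (q-1) = 2*n+1 \<and> yl n q + yl n (q-1) = 6*n+1"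
proof -
  assume q: "q < 2*n" "odd q"
  then obtain m where m: "q = 2*m + 1" using oddE by blast
  have "q - 1 = 2*m" using m by simp
  then show ?thesis using m q by (simp add: xl_def yl_def)
qed

theorem lemma2p1:
  fixes n :: nat and S1 S2 :: "(nat \<times> nat) set"
  assumes "n \<ge> 2"
    and "hamilton_cycle n S1" and "hamilton_cycle n S2"
    and "S1 \<inter> S2 = {}"
  shows "\<exists>f :: nat \<times> nat \<Rightarrow> nat.
           bij_betw f (S1 \<union> S2) {1..4 * n} \<and>
           (\<forall>i\<in>{1..n}. (\<Sum>j\<in>{j. (i, j) \<in> S1 \<union> S2}. f (i, j)) = 8 * n + 2) \<and>
           (\<forall>j\<in>{1..n}. (\<Sum>i\<in>{i. (i, j) \<in> S1 \<union> S2}. f (i, j)) = 8 * n + 2)"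
proof -
  note n2 = assms(1)
  have sub1: "S1 \<subseteq> cells n" and sub2: "S2 \<subseteq> cells n"
    using assms(2,3) by (auto simp: hamilton_cycle_def)
  obtain vs1 where v1: "length vs1 = 2*n" "distinct vs1" "set vs1 = knn_vertices n" "vs1!0 = Inl 1"
     "cell_edge ` S1 = {{vs1 ! k, vs1 ! ((k + 1) mod (2 * n))} | k. k < 2 * n}"
    using rot_exists[OF n2 assms(2)] by blast
  obtain vs2 where v2: "length vs2 = 2*n" "distinct vs2" "set vs2 = knn_vertices n" "vs2!0 = Inl 1"
     "cell_edge ` S2 = {{vs2 ! k, vs2 ! ((k + 1) mod (2 * n))} | k. k < 2 * n}"
    using rot_exists[OF n2 assms(3)] by blast
  obtain idx1 where I1: "bij_betw idx1 S1 {..<2*n}"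
     "\<forall>i\<in>{1..n}. \<exists>q. q < 2*n \<and> even q \<and> (i = 1 \<longleftrightarrow> q = 0) \<and>
         (\<forall>x::nat\<Rightarrow>nat. (\<Sum>j\<in>{j. (i,j)\<in>S1}. x (idx1 (i,j))) = x q + x (if q = 0 then 2*n-1 else q-1))"
     "\<forall>j\<in>{1..n}. \<exists>q. q < 2*n \<and> odd q \<and> q \<noteq> 0 \<and>
         (\<forall>x::nat\<Rightarrow>nat. (\<Sum>i\<in>{i. (i,j)\<in>S1}. x (idx1 (i,j))) = x q + x (q-1))"
    using cycle_struct[OF n2 sub1 v1] by blast
  obtain idx2 where I2: "bij_betw idx2 S2 {..<2*n}"
     "\<forall>i\<in>{1..n}. \<exists>q. q < 2*n \<and> even q \<and> (i = 1 \<longleftrightarrow> q = 0) \<and>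
         (\<forall>x::nat\<Rightarrow>nat. (\<Sum>j\<in>{j. (i,j)\<in>S2}. x (idx2 (i,j))) = x q + x (if q = 0 then 2*n-1 else q-1))"
     "\<forall>j\<in>{1..n}. \<exists>q. q < 2*n \<and> odd q \<and> q \<noteq> 0 \<and>
         (\<forall>x::nat\<Rightarrow>nat. (\<Sum>i\<in>{i. (i,j)\<in>S2}. x (idx2 (i,j))) = x q + x (q-1))"
    using cycle_struct[OF n2 sub2 v2] by blast
  define f where "f c = (if c \<in> S1 then xl n (idx1 c) else yl n (idx2 c))" for c
  have fin1: "finite S1" and fin2: "finite S2"
    using sub1 sub2 unfolding cells_def by (meson finite_SigmaI finite_atLeastAtMost finite_subset)+
  have img: "f ` (S1 \<union> S2) = {1..4*n}"
  proof -
    have "f ` (S1 \<union> S2) = f ` S1 \<union> f ` S2" by blast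
    also have "f ` S1 = xl n ` idx1 ` S1" by (auto simp: f_def image_image)
    also have "f ` S2 = yl n ` idx2 ` S2" using assms(4) by (force simp: f_def image_image)
    also have "idx1 ` S1 = {..<2*n}" using I1(1) by (simp add: bij_betw_def)
    also have "idx2 ` S2 = {..<2*n}" using I2(1) by (simp add: bij_betw_def)
    finally show ?thesis using xl_img yl_img by auto
  qed
  have "card (S1 \<union> S2) = 4*n"
    using card_Un_disjoint[OF fin1 fin2 assms(4)] bij_betw_same_card[OF I1(1)] bij_betw_same_card[OF I2(1)]
    by simp
  then have "inj_on f (S1 \<union> S2)" using img fin1 fin2
    by (intro eq_card_imp_inj_on) auto
  then have bij: "bij_betw f (S1 \<union> S2) {1..4*n}" using img by (simp add: bij_betw_def)
  have rows: "(\<Sum>j\<in>{j. (i, j) \<in> S1 \<union> S2}. f (i, j)) = 8 * n + 2" if i: "i \<in> {1..n}" for i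
  proof -
    have "{j. (i,j)\<in>S1} \<subseteq> {1..n}" "{j. (i,j)\<in>S2} \<subseteq> {1..n}"
      using sub1 sub2 by (auto simp: cells_def)
    then have fa: "finite {j. (i,j)\<in>S1}" "finite {j. (i,j)\<in>S2}"
      by (auto intro: finite_subset)
    have "{j. (i, j) \<in> S1 \<union> S2} = {j. (i,j)\<in>S1} \<union> {j. (i,j)\<in>S2}" by blast
    then have "(\<Sum>j\<in>{j. (i, j) \<in> S1 \<union> S2}. f (i, j)) =
        (\<Sum>j\<in>{j. (i,j)\<in>S1}. f (i,j)) + (\<Sum>j\<in>{j. (i,j)\<in>S2}. f (i,j))"
      using sum.union_disjoint[OF fa] assms(4) by auto
    also have "(\<Sum>j\<in>{j. (i,j)\<in>S1}. f (i,j)) = (\<Sum>j\<in>{j. (i,j)\<in>S1}. xl n (idx1 (i,j)))"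
      by (rule sum.cong) (auto simp: f_def)
    also have "(\<Sum>j\<in>{j. (i,j)\<in>S2}. f (i,j)) = (\<Sum>j\<in>{j. (i,j)\<in>S2}. yl n (idx2 (i,j)))"
      using assms(4) by (intro sum.cong) (auto simp: f_def)
    finally have s: "(\<Sum>j\<in>{j. (i, j) \<in> S1 \<union> S2}. f (i, j)) =
        (\<Sum>j\<in>{j. (i,j)\<in>S1}. xl n (idx1 (i,j))) + (\<Sum>j\<in>{j. (i,j)\<in>S2}. yl n (idx2 (i,j)))" .
    obtain q1 where q1: "q1 < 2*n" "even q1" "i = 1 \<longleftrightarrow> q1 = 0"
      "\<And>x::nat\<Rightarrow>nat. (\<Sum>j\<in>{j. (i,j)\<in>S1}. x (idx1 (i,j))) = x q1 + x (if q1 = 0 then 2*n-1 else q1-1)"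
      using I1(2) i by blast
    obtain q2 where q2: "q2 < 2*n" "even q2" "i = 1 \<longleftrightarrow> q2 = 0"
      "\<And>x::nat\<Rightarrow>nat. (\<Sum>j\<in>{j. (i,j)\<in>S2}. x (idx2 (i,j))) = x q2 + x (if q2 = 0 then 2*n-1 else q2-1)"
      using I2(2) i by blast
    show ?thesis
    proof (cases "i = 1")
      case True
      then show ?thesis using s q1 q2 arith0[of n] n2 by simp
    next
      case False
      then show ?thesis using s q1 q2 arith_even[of q1 n] arith_even[of q2 n] by simp
    qed
  qed
  have cols: "(\<Sum>i\<in>{i. (i, j) \<in> S1 \<union> S2}. f (i, j)) = 8 * n + 2" if j: "j \<in> {1..n}" for j
  proof -
    have "{i. (i,j)\<in>S1} \<subseteq> {1..n}" "{i. (i,j)\<in>S2} \<subseteq> {1..n}"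
      using sub1 sub2 by (auto simp: cells_def)
    then have fa: "finite {i. (i,j)\<in>S1}" "finite {i. (i,j)\<in>S2}"
      by (auto intro: finite_subset)
    have "{i. (i, j) \<in> S1 \<union> S2} = {i. (i,j)\<in>S1} \<union> {i. (i,j)\<in>S2}" by blast
    then have "(\<Sum>i\<in>{i. (i, j) \<in> S1 \<union> S2}. f (i, j)) =
        (\<Sum>i\<in>{i. (i,j)\<in>S1}. f (i,j)) + (\<Sum>i\<in>{i. (i,j)\<in>S2}. f (i,j))"
      using sum.union_disjoint[OF fa] assms(4) by auto
    also have "(\<Sum>i\<in>{i. (i,j)\<in>S1}. f (i,j)) = (\<Sum>i\<in>{i. (i,j)\<in>S1}. xl n (idx1 (i,j)))"
      by (rule sum.cong) (auto simp: f_def)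
    also have "(\<Sum>i\<in>{i. (i,j)\<in>S2}. f (i,j)) = (\<Sum>i\<in>{i. (i,j)\<in>S2}. yl n (idx2 (i,j)))"
      using assms(4) by (intro sum.cong) (auto simp: f_def)
    finally have s: "(\<Sum>i\<in>{i. (i, j) \<in> S1 \<union> S2}. f (i, j)) =
        (\<Sum>i\<in>{i. (i,j)\<in>S1}. xl n (idx1 (i,j))) + (\<Sum>i\<in>{i. (i,j)\<in>S2}. yl n (idx2 (i,j)))" .
    obtain q1 where q1: "q1 < 2*n" "odd q1"
      "\<And>x::nat\<Rightarrow>nat. (\<Sum>i\<in>{i. (i,j)\<in>S1}. x (idx1 (i,j))) = x q1 + x (q1-1)"
      using I1(3) j by blast
    obtain q2 where q2: "q2 < 2*n" "odd q2"
      "\<And>x::nat\<Rightarrow>nat. (\<Sum>i\<in>{i. (i,j)\<in>S2}. x (idx2 (i,j))) = x q2 + x (q2-1)"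
      using I2(3) j by blast
    show ?thesis using s q1 q2 arith_odd[of q1 n] arith_odd[of q2 n] by simp
  qed
  show ?thesis using bij rows cols by blast
qed

end
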